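(* Let $\kappa\ge2$. The model $\mathrm{EE}_\kappa(((a,b),c))$ is contained in the real algebraic variety defined by the degree-$(\kappa+1)$ polynomials in the entries of $P$ given by the entries of the $2\kappa$ matrix expressions, for $k\in[\kappa]$, $$P_{+\cdot\cdot}\operatorname{Cof}(P_{\cdot+\cdot})^TP_{\cdot\cdot k}-P_{\cdot\cdot k}^T\operatorname{Cof}(P_{\cdot+\cdot})P_{+\cdot\cdot}^T,\qquad P_{\cdot\cdot k}\operatorname{Cof}(P_{+\cdot\cdot})P_{\cdot+\cdot}^T-P_{\cdot+\cdot}\operatorname{Cof}(P_{+\cdot\cdot})^TP_{\cdot\cdot k}^T.$$
   Context: A $\kappa$-state site pattern probability tensor on $X$ ($|X|=n$) is an $n$-way $\kappa\times\cdots\times\kappa$ array with one index per taxon, non-negative entries summing to 1. $P_Y$ is the marginalization to $Y\subseteq X$; $\psi^+|_Y$ is the induced rooted subtree; a 2-clade is a pair of leaves that are exactly the leaf descendants of some vertex. $\mathrm{UE}_\kappa(\psi^+)$: all such tensors $P$ such that for every $Y\subseteq X$ and every 2-clade $\{x,y\}$ of $\psi^+|_Y$, $P_Y$ is invariant under exchanging the $x$ and $y$ indices. For a $\kappa\times\kappa$ matrix $M$, $P*_kM$ is the tensor whose entry at $(i_1,\dots,i_n)$ is the $i_k$-th entry of $vM$, $v$ the row vector obtained by fixing all indices $\ell\ne k$ to $i_\ell$; $P*(M_1,\dots,M_n)=(\cdots(P*_1M_1)\cdots)*_nM_n$. $\mathrm{EE}_\kappa(\psi^+)$: all $\kappa$-state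 site pattern probability tensors $P$ such that $P*(M_1,\dots,M_n)=\tilde P$ for some non-singular Markov matrices $M_i$ and some non-negative $\tilde P\in\mathrm{UE}_\kappa(\psi^+)$. For a 3-way tensor $P=(p_{ijk})$ with indices ordered $a,b,c$: $P_{+\cdot\cdot}$ has $(j,k)$-entry $\sum_ip_{ijk}$; $P_{\cdot+\cdot}$ has $(i,k)$-entry $\sum_jp_{ijk}$; $P_{\cdot\cdot k}$ has $(i,j)$-entry $p_{ijk}$. $\operatorname{Cof}(A)$ is the matrix of cofactors of $A$; $^T$ is transpose. *)

theory Defs
  imports Main "Jordan_Normal_Form.Determinant"
begin

text \<open>Taxa: a = 0, b = 1, c = 2; X = {0,1,2}.  A kappa-state tensor on X is a real function
  on index assignments s : X \<rightarrow> {0..<kappa} (elements of PiE X).\<close>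

definition taxa :: "nat set" where "taxa = {0,1,2}"

definition states :: "nat \<Rightarrow> nat set \<Rightarrow> (nat \<Rightarrow> nat) set" where
  "states \<kappa> Y = PiE Y (\<lambda>_. {..<\<kappa>})"

definition site_pattern_tensor :: "nat \<Rightarrow> ((nat \<Rightarrow> nat) \<Rightarrow> real) \<Rightarrow> bool" where
  "site_pattern_tensor \<kappa> P \<longleftrightarrow>
     (\<forall>s\<in>states \<kappa> taxa. 0 \<le> P s) \<and> (\<Sum>s\<in>states \<kappa> taxa. P s) = 1"

definition marg :: "nat \<Rightarrow> nat set \<Rightarrow> ((nat \<Rightarrow> nat) \<Rightarrow> real) \<Rightarrow> (nat \<Rightarrow> nat) \<Rightarrow> real" where
  "marg \<kappa> Y P s = (\<Sum>t\<in>{t\<in>states \<kappa> taxa. restrict t Y = s}. P t)"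

text \<open>Clusters (leaf-descendant sets of vertices) of the rooted tree ((a,b),c); the clusters of the
  induced rooted subtree on Y are the nonempty intersections with Y; a 2-clade is a cluster
  of cardinality two.\<close>
definition tree_clusters :: "nat set set" where
  "tree_clusters = {{0}, {1}, {2}, {0,1}, {0,1,2}}"

definition two_clades :: "nat set \<Rightarrow> nat set set" where
  "two_clades Y = {C \<inter> Y | C. C \<in> tree_clusters \<and> card (C \<inter> Y) = 2}"

definition UE :: "nat \<Rightarrow> ((nat \<Rightarrow> nat) \<Rightarrow> real) set" where
  "UE \<kappa> = {P. site_pattern_tensor \<kappa> P \<and>
     (\<forall>Y\<subseteq>taxa. \<forall>x y. {x, y} \<in> two_clades Y \<longrightarrow>
        (\<forall>s\<in>states \<kappa> Y. marg \<kappa> Y P (s(x := s y, y := s x)) = marg \<kappa> Y P s))}"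

definition markov :: "nat \<Rightarrow> real mat \<Rightarrow> bool" where
  "markov \<kappa> M \<longleftrightarrow> M \<in> carrier_mat \<kappa> \<kappa> \<and>
     (\<forall>i<\<kappa>. \<forall>j<\<kappa>. 0 \<le> M $$ (i,j)) \<and> (\<forall>i<\<kappa>. (\<Sum>j<\<kappa>. M $$ (i,j)) = 1)"

definition act :: "nat \<Rightarrow> ((nat \<Rightarrow> nat) \<Rightarrow> real) \<Rightarrow> nat \<Rightarrow> real mat \<Rightarrow> (nat \<Rightarrow> nat) \<Rightarrow> real" where
  "act \<kappa> P k M i = (\<Sum>j<\<kappa>. P (i(k := j)) * M $$ (j, i k))"

definition EE :: "nat \<Rightarrow> ((nat \<Rightarrow> nat) \<Rightarrow> real) set" where
  "EE \<kappa> = {P. site_pattern_tensor \<kappa> P \<and>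
     (\<exists>M0 M1 M2 Pt. markov \<kappa> M0 \<and> markov \<kappa> M1 \<and> markov \<kappa> M2 \<and>
        det M0 \<noteq> 0 \<and> det M1 \<noteq> 0 \<and> det M2 \<noteq> 0 \<and>
        Pt \<in> UE \<kappa> \<and> (\<forall>s\<in>states \<kappa> taxa. 0 \<le> Pt s) \<and>
        (\<forall>s\<in>states \<kappa> taxa. act \<kappa> (act \<kappa> (act \<kappa> P 0 M0) 1 M1) 2 M2 s = Pt s))}"

definition ent :: "((nat \<Rightarrow> nat) \<Rightarrow> real) \<Rightarrow> nat \<Rightarrow> nat \<Rightarrow> nat \<Rightarrow> real" where
  "ent P i j k = P ((\<lambda>_. undefined)(0 := i, 1 := j, 2 := k))"

definition marg_a :: "nat \<Rightarrow> ((nat \<Rightarrow> nat) \<Rightarrow> real) \<Rightarrow> real mat" where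
  "marg_a \<kappa> P = mat \<kappa> \<kappa> (\<lambda>(j,k). \<Sum>i<\<kappa>. ent P i j k)"

definition marg_b :: "nat \<Rightarrow> ((nat \<Rightarrow> nat) \<Rightarrow> real) \<Rightarrow> real mat" where
  "marg_b \<kappa> P = mat \<kappa> \<kappa> (\<lambda>(i,k). \<Sum>j<\<kappa>. ent P i j k)"

definition slice_c :: "nat \<Rightarrow> ((nat \<Rightarrow> nat) \<Rightarrow> real) \<Rightarrow> nat \<Rightarrow> real mat" where
  "slice_c \<kappa> P k = mat \<kappa> \<kappa> (\<lambda>(i,j). ent P i j k)"

definition cof :: "real mat \<Rightarrow> real mat" where
  "cof A = mat (dim_row A) (dim_col A) (\<lambda>(i,j). cofactor A i j)"

end

theory Submission imports Defs begin

lemma sym_cancel: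
  fixes M X :: "real mat"
  assumes M: "M \<in> carrier_mat n n" and X: "X \<in> carrier_mat n n" and d: "det M \<noteq> 0"
  and s: "transpose_mat (transpose_mat M * X * M) = transpose_mat M * X * M"
  shows "transpose_mat X = X"
proof -
  define N where "N = adj_mat M"
  have N: "N \<in> carrier_mat n n" and MN: "M * N = det M \<cdot>\<^sub>m 1\<^sub>m n"
    using adj_mat[OF M] unfolding N_def by auto
  have key: "transpose_mat N * (transpose_mat M * Y * M) * N = (det M * det M) \<cdot>\<^sub>m Y"
    if Y: "Y \<in> carrier_mat n n" for Y
  proof -
    have "transpose_mat N * (transpose_mat M * Y * M) * N = (transpose_mat N * transpose_mat M) * Y * (M * N)"
      using M N Y by (simp add: assoc_mult_mat[of _ n n _ n _ n])
    also have "transpose_mat N * transpose_mat M = transpose_mat (M * N)"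
      using M N by (simp add: transpose_mult)
    also have "transpose_mat (M * N) = det M \<cdot>\<^sub>m 1\<^sub>m n" unfolding MN
      by (rule eq_matI) auto
    finally show ?thesis unfolding MN using Y
      by (auto intro!: eq_matI)
  qed
  have "transpose_mat M * transpose_mat X * M = transpose_mat (transpose_mat M * X * M)"
    using M X by (simp add: transpose_mult[of _ n n _ n] )
  hence e: "(det M * det M) \<cdot>\<^sub>m transpose_mat X = (det M * det M) \<cdot>\<^sub>m X"
    using key[of X] key[of "transpose_mat X"] s X by simp
  show ?thesis
  proof (rule eq_matI)
    fix i j assume ij: "i < dim_row X" "j < dim_col X"
    have "((det M * det M) \<cdot>\<^sub>m transpose_mat X) $$ (i,j) = ((det M * det M) \<cdot>\<^sub>m X) $$ (i,j)"
      using e by simp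
    thus "transpose_mat X $$ (i, j) = X $$ (i, j)" using ij X d by auto
  qed (use X in auto)
qed

definition fe :: "nat \<Rightarrow> nat \<Rightarrow> nat \<Rightarrow> nat \<Rightarrow> nat" where
  "fe i j k = (\<lambda>_. undefined)(0 := i, 1 := j, 2 := k)"

lemma fe_upd: "(fe i j k)(2 := n) = fe i j n" "(fe i j k)(1 := m) = fe i m k"
  "(fe i j k)(0 := l) = fe l j k" "fe i j k 0 = i" "fe i j k 1 = j" "fe i j k 2 = k"
  "(fe i j k)(Suc 0 := m) = fe i m k" "fe i j k (Suc 0) = j"
  by (auto simp: fe_def intro!: ext)

lemma fe_states: "i < \<kappa> \<Longrightarrow> j < \<kappa> \<Longrightarrow> k < \<kappa> \<Longrightarrow> fe i j k \<in> states \<kappa> taxa"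
  by (auto simp: fe_def states_def taxa_def PiE_def extensional_def)

lemma ent_fe: "ent P i j k = P (fe i j k)"
  by (simp add: ent_def fe_def)

lemma expand:
  assumes "\<forall>s\<in>states \<kappa> taxa. act \<kappa> (act \<kappa> (act \<kappa> P 0 A) 1 B) 2 C s = Pt s"
    and "i < \<kappa>" "j < \<kappa>" "k < \<kappa>"
  shows "ent Pt i j k = (\<Sum>n<\<kappa>. (\<Sum>m<\<kappa>. (\<Sum>l<\<kappa>. ent P l m n * A$$(l,i)) * B$$(m,j)) * C$$(n,k))"
proof -
  have "ent Pt i j k = act \<kappa> (act \<kappa> (act \<kappa> P 0 A) 1 B) 2 C (fe i j k)"
    using assms fe_states[of i \<kappa> j k] by (simp add: ent_fe)
  also have "\<dots> = (\<Sum>n<\<kappa>. (\<Sum>m<\<kappa>. (\<Sum>l<\<kappa>. ent P l m n * A$$(l,i)) * B$$(m,j)) * C$$(n,k))"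
    by (simp add: act_def fe_upd ent_fe)
  finally show ?thesis .
qed

lemma Zent:
  assumes A: "A \<in> carrier_mat \<kappa> \<kappa>" and B: "B \<in> carrier_mat \<kappa> \<kappa>" and "i < \<kappa>" "j < \<kappa>"
  shows "(transpose_mat A * slice_c \<kappa> P n * B) $$ (i,j)
     = (\<Sum>m<\<kappa>. (\<Sum>l<\<kappa>. ent P l m n * A$$(l,i)) * B$$(m,j))"
  using assms by (simp add: slice_c_def scalar_prod_def lessThan_atLeast0 mult.commute)

lemma vec_cancel:
  fixes C :: "real mat"
  assumes C: "C \<in> carrier_mat \<kappa> \<kappa>" and d: "det C \<noteq> 0"
    and z: "\<forall>k<\<kappa>. (\<Sum>n<\<kappa>. x n * C$$(n,k)) = 0" and n': "n' < \<kappa>"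
  shows "x n' = 0"
proof -
  have CA: "C * adj_mat C = det C \<cdot>\<^sub>m 1\<^sub>m \<kappa>" and aC: "adj_mat C \<in> carrier_mat \<kappa> \<kappa>"
    using adj_mat[OF C] by auto
  have "(\<Sum>n<\<kappa>. x n * (C * adj_mat C) $$ (n,n')) = (\<Sum>n<\<kappa>. x n * (if n = n' then det C else 0))"
    using n' by (intro sum.cong) (auto simp: CA)
  also have "\<dots> = x n' * det C" using n' by (simp add: if_distrib cong: if_cong)
  finally have 1: "(\<Sum>n<\<kappa>. x n * (C * adj_mat C) $$ (n,n')) = x n' * det C" .
  have "(\<Sum>n<\<kappa>. x n * (C * adj_mat C) $$ (n,n'))
      = (\<Sum>n<\<kappa>. \<Sum>k<\<kappa>. x n * C$$(n,k) * adj_mat C $$ (k,n'))"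
    using C aC n' by (intro sum.cong) (auto simp: scalar_prod_def lessThan_atLeast0 sum_distrib_left mult.assoc)
  also have "\<dots> = (\<Sum>k<\<kappa>. (\<Sum>n<\<kappa>. x n * C$$(n,k)) * adj_mat C $$ (k,n'))"
    by (subst sum.swap) (simp add: sum_distrib_right)
  also have "\<dots> = 0" using z by simp
  finally show ?thesis using 1 d by simp
qed

lemma transpose_smult: "transpose_mat (c \<cdot>\<^sub>m A) = c \<cdot>\<^sub>m transpose_mat A"
  by (rule eq_matI) auto

lemma tcof: "A \<in> carrier_mat n n \<Longrightarrow> transpose_mat (cof A) = adj_mat A"
  by (rule eq_matI) (auto simp: cof_def adj_mat_def)

lemma marg_full: "s \<in> states \<kappa> taxa \<Longrightarrow> marg \<kappa> taxa Pt s = Pt s"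
proof -
  assume s: "s \<in> states \<kappa> taxa"
  have "{t \<in> states \<kappa> taxa. restrict t taxa = s} = {s}"
    using s by (auto simp: states_def)
  thus ?thesis by (simp add: marg_def)
qed

lemma ue_sym:
  assumes "Pt \<in> UE \<kappa>" "i < \<kappa>" "j < \<kappa>" "k < \<kappa>"
  shows "ent Pt i j k = ent Pt j i k"
proof -
  have tc: "{0, 1} \<in> two_clades taxa"
    unfolding two_clades_def tree_clusters_def taxa_def
    by (rule CollectI, rule exI[of _ "{0,1}"]) auto
  have "\<forall>s\<in>states \<kappa> taxa. marg \<kappa> taxa Pt (s(0 := s 1, 1 := s 0)) = marg \<kappa> taxa Pt s"
    using assms(1) tc unfolding UE_def by blast
  hence "marg \<kappa> taxa Pt ((fe i j k)(0 := fe i j k 1, 1 := fe i j k 0)) = marg \<kappa> taxa Pt (fe i j k)"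
    using fe_states[OF assms(2-4)] by blast
  hence "marg \<kappa> taxa Pt (fe j i k) = marg \<kappa> taxa Pt (fe i j k)"
    by (simp add: fe_upd)
  thus ?thesis using marg_full fe_states assms by (simp add: ent_fe)
qed

theorem corollary6p2:
  fixes \<kappa> :: nat and P :: "(nat \<Rightarrow> nat) \<Rightarrow> real"
  assumes "\<kappa> \<ge> 2" and "P \<in> EE \<kappa>"
  shows "\<forall>k<\<kappa>.
     marg_a \<kappa> P * transpose_mat (cof (marg_b \<kappa> P)) * slice_c \<kappa> P k
       - transpose_mat (slice_c \<kappa> P k) * cof (marg_b \<kappa> P) * transpose_mat (marg_a \<kappa> P)
       = 0\<^sub>m \<kappa> \<kappa> \<and>
     slice_c \<kappa> P k * cof (marg_a \<kappa> P) * transpose_mat (marg_b \<kappa> P)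
       - marg_b \<kappa> P * transpose_mat (cof (marg_a \<kappa> P)) * transpose_mat (slice_c \<kappa> P k)
       = 0\<^sub>m \<kappa> \<kappa>"
proof -
  obtain A B C Pt where mA: "markov \<kappa> A" and mB: "markov \<kappa> B" and mC: "markov \<kappa> C"
    and dA: "det A \<noteq> 0" and dB: "det B \<noteq> 0" and dC: "det C \<noteq> 0"
    and UE: "Pt \<in> UE \<kappa>"
    and act: "\<forall>s\<in>states \<kappa> taxa. act \<kappa> (act \<kappa> (act \<kappa> P 0 A) 1 B) 2 C s = Pt s"
    using assms(2) unfolding EE_def by blast
  have cA: "A \<in> carrier_mat \<kappa> \<kappa>" and cB: "B \<in> carrier_mat \<kappa> \<kappa>" and cC: "C \<in> carrier_mat \<kappa> \<kappa>"
    using mA mB mC by (auto simp: markov_def)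
  have rA: "\<And>i. i < \<kappa> \<Longrightarrow> (\<Sum>j<\<kappa>. A $$ (i,j)) = 1"
    and rB: "\<And>i. i < \<kappa> \<Longrightarrow> (\<Sum>j<\<kappa>. B $$ (i,j)) = 1"
    using mA mB by (auto simp: markov_def)
  define Q where "Q = marg_a \<kappa> P"
  define R where "R = marg_b \<kappa> P"
  define S where "S n = slice_c \<kappa> P n" for n
  define Z where "Z n = transpose_mat A * S n * B" for n
  have cQ: "Q \<in> carrier_mat \<kappa> \<kappa>" and cR: "R \<in> carrier_mat \<kappa> \<kappa>"
    and cS: "\<And>n. S n \<in> carrier_mat \<kappa> \<kappa>"
    by (auto simp: Q_def R_def S_def marg_a_def marg_b_def slice_c_def)
  have cZ: "\<And>n. Z n \<in> carrier_mat \<kappa> \<kappa>" using cA cB cS by (auto simp: Z_def)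
  have Zent': "\<And>n i j. i < \<kappa> \<Longrightarrow> j < \<kappa> \<Longrightarrow> Z n $$ (i,j)
     = (\<Sum>m<\<kappa>. (\<Sum>l<\<kappa>. ent P l m n * A$$(l,i)) * B$$(m,j))"
    unfolding Z_def S_def using Zent[OF cA cB] by blast
  have Zsym: "transpose_mat (Z n) = Z n" if n: "n < \<kappa>" for n
  proof (rule eq_matI)
    fix i j assume ij: "i < dim_row (Z n)" "j < dim_col (Z n)"
    hence ij': "i < \<kappa>" "j < \<kappa>" using cZ[of n] by auto
    have "\<forall>k<\<kappa>. (\<Sum>n<\<kappa>. (Z n $$ (i,j) - Z n $$ (j,i)) * C$$(n,k)) = 0"
    proof (intro allI impI)
      fix k assume k: "k < \<kappa>"
      have "(\<Sum>n<\<kappa>. (Z n $$ (i,j) - Z n $$ (j,i)) * C$$(n,k))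
         = ent Pt i j k - ent Pt j i k"
        using ij' k by (simp add: expand[OF act] Zent' left_diff_distrib sum_subtractf)
      thus "(\<Sum>n<\<kappa>. (Z n $$ (i,j) - Z n $$ (j,i)) * C$$(n,k)) = 0"
        using ue_sym[OF UE ij' k] by simp
    qed
    from vec_cancel[OF cC dC this n]
    show "transpose_mat (Z n) $$ (i, j) = Z n $$ (i, j)" using ij cZ[of n] by auto
  qed (use cZ[of n] in auto)
  have AR: "transpose_mat A * R = transpose_mat B * Q"
  proof (rule eq_matI)
    fix i n assume "i < dim_row (transpose_mat B * Q)" "n < dim_col (transpose_mat B * Q)"
    hence i: "i < \<kappa>" and n: "n < \<kappa>" using cB cQ by auto
    have "(\<Sum>j<\<kappa>. Z n $$ (i,j)) = (\<Sum>j<\<kappa>. \<Sum>m<\<kappa>. (\<Sum>l<\<kappa>. ent P l m n * A$$(l,i)) * B$$(m,j))"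
      using i by (intro sum.cong) (auto simp: Zent')
    also have "\<dots> = (\<Sum>m<\<kappa>. (\<Sum>l<\<kappa>. ent P l m n * A$$(l,i)) * (\<Sum>j<\<kappa>. B$$(m,j)))"
      by (subst sum.swap) (simp add: sum_distrib_left)
    also have "\<dots> = (\<Sum>m<\<kappa>. (\<Sum>l<\<kappa>. ent P l m n * A$$(l,i)))"
      using rB by simp
    also have "\<dots> = (\<Sum>l<\<kappa>. A$$(l,i) * (\<Sum>m<\<kappa>. ent P l m n))"
      by (subst sum.swap) (simp add: sum_distrib_left mult.commute)
    also have "\<dots> = (transpose_mat A * R) $$ (i,n)"
      using cA i n by (simp add: R_def marg_b_def scalar_prod_def lessThan_atLeast0)
    finally have 1: "(\<Sum>j<\<kappa>. Z n $$ (i,j)) = (transpose_mat A * R) $$ (i,n)" .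
    have "(\<Sum>j<\<kappa>. Z n $$ (j,i)) = (\<Sum>j<\<kappa>. \<Sum>m<\<kappa>. (\<Sum>l<\<kappa>. ent P l m n * A$$(l,j)) * B$$(m,i))"
      using i by (intro sum.cong) (auto simp: Zent')
    also have "\<dots> = (\<Sum>m<\<kappa>. (\<Sum>j<\<kappa>. \<Sum>l<\<kappa>. ent P l m n * A$$(l,j)) * B$$(m,i))"
      by (subst sum.swap) (simp add: sum_distrib_right)
    also have "\<dots> = (\<Sum>m<\<kappa>. (\<Sum>l<\<kappa>. ent P l m n * (\<Sum>j<\<kappa>. A$$(l,j))) * B$$(m,i))"
    proof -
      have "(\<Sum>j<\<kappa>. \<Sum>l<\<kappa>. ent P l m n * A$$(l,j)) = (\<Sum>l<\<kappa>. ent P l m n * (\<Sum>j<\<kappa>. A$$(l,j)))" for m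
        by (subst sum.swap) (simp add: sum_distrib_left)
      thus ?thesis by simp
    qed
    also have "\<dots> = (\<Sum>m<\<kappa>. B$$(m,i) * (\<Sum>l<\<kappa>. ent P l m n))"
      using rA by (simp add: mult.commute)
    also have "\<dots> = (transpose_mat B * Q) $$ (i,n)"
      using cB i n by (simp add: Q_def marg_a_def scalar_prod_def lessThan_atLeast0)
    finally have 2: "(\<Sum>j<\<kappa>. Z n $$ (j,i)) = (transpose_mat B * Q) $$ (i,n)" .
    have "(\<Sum>j<\<kappa>. Z n $$ (j,i)) = (\<Sum>j<\<kappa>. Z n $$ (i,j))"
    proof (intro sum.cong refl)
      fix j assume "j \<in> {..<\<kappa>}"
      thus "Z n $$ (j,i) = Z n $$ (i,j)"
        using arg_cong[OF Zsym[OF n], of "\<lambda>M. M $$ (i,j)"] i cZ[of n] by auto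
    qed
    thus "(transpose_mat A * R) $$ (i, n) = (transpose_mat B * Q) $$ (i, n)" using 1 2 by simp
  qed (use cA cB cQ cR in auto)
  have AR': "transpose_mat B * (Q * Y) = transpose_mat A * (R * Y)" if "Y \<in> carrier_mat \<kappa> \<kappa>" for Y
  proof -
    have "transpose_mat B * (Q * Y) = (transpose_mat B * Q) * Y"
      by (rule assoc_mult_mat[symmetric, of _ \<kappa> \<kappa> _ \<kappa> _ \<kappa>]) (use that cB cQ in auto)
    also have "\<dots> = (transpose_mat A * R) * Y" by (simp add: AR)
    also have "\<dots> = transpose_mat A * (R * Y)"
      by (rule assoc_mult_mat[of _ \<kappa> \<kappa> _ \<kappa> _ \<kappa>]) (use that cA cR in auto)
    finally show ?thesis .
  qed
  have adjR: "R * adj_mat R = det R \<cdot>\<^sub>m 1\<^sub>m \<kappa>" "adj_mat R \<in> carrier_mat \<kappa> \<kappa>"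
    using adj_mat[OF cR] by auto
  have adjQ: "Q * adj_mat Q = det Q \<cdot>\<^sub>m 1\<^sub>m \<kappa>" "adj_mat Q \<in> carrier_mat \<kappa> \<kappa>"
    using adj_mat[OF cQ] by auto
  have cofQ: "cof Q \<in> carrier_mat \<kappa> \<kappa>" and cofR: "cof R \<in> carrier_mat \<kappa> \<kappa>"
    using cQ cR by (auto simp: cof_def)
  have tQ: "transpose_mat (cof Q) = adj_mat Q" and tR: "transpose_mat (cof R) = adj_mat R"
    using tcof cQ cR by blast+
  have cm: "\<And>X Y. X \<in> carrier_mat \<kappa> \<kappa> \<Longrightarrow> Y \<in> carrier_mat \<kappa> \<kappa> \<Longrightarrow> X * Y \<in> carrier_mat \<kappa> \<kappa>"
    by (rule mult_carrier_mat)
  have cT: "\<And>X. X \<in> carrier_mat \<kappa> \<kappa> \<Longrightarrow> transpose_mat X \<in> carrier_mat \<kappa> \<kappa>" by simp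
  note ms = assoc_mult_mat[of _ \<kappa> \<kappa> _ \<kappa> _ \<kappa>] cm cT cA cB cQ cR cS adjR(2) adjQ(2) cofQ cofR
  have RY: "R * (adj_mat R * Y) = det R \<cdot>\<^sub>m Y" if Y: "Y \<in> carrier_mat \<kappa> \<kappa>" for Y
  proof -
    have "R * (adj_mat R * Y) = (R * adj_mat R) * Y"
      by (rule assoc_mult_mat[symmetric, of _ \<kappa> \<kappa> _ \<kappa> _ \<kappa>]) (use Y cR adjR in auto)
    also have "\<dots> = det R \<cdot>\<^sub>m Y" unfolding adjR(1) using Y
      by (simp add: mult_smult_assoc_mat[of _ \<kappa> \<kappa> _ \<kappa>])
    finally show ?thesis .
  qed
  show ?thesis unfolding Q_def[symmetric] R_def[symmetric] S_def[symmetric]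
  proof (intro allI impI conjI)
    fix k assume k: "k < \<kappa>"
    define X where "X = Q * adj_mat R * S k"
    have cX: "X \<in> carrier_mat \<kappa> \<kappa>" unfolding X_def
      by (rule mult_carrier_mat[OF mult_carrier_mat[OF cQ adjR(2)] cS])
    have "transpose_mat B * X * B = transpose_mat B * (Q * (adj_mat R * (S k * B)))"
      using cB cQ adjR cS by (simp add: X_def ms)
    also have "\<dots> = transpose_mat A * (R * (adj_mat R * (S k * B)))"
      using cB adjR cS by (intro AR') auto
    also have "\<dots> = transpose_mat A * (det R \<cdot>\<^sub>m (S k * B))"
      using RY[of "S k * B"] cS cB by (simp add: ms)
    also have "\<dots> = det R \<cdot>\<^sub>m Z k"
      unfolding Z_def using cA cS cB
      by (simp add: ms mult_smult_distrib[of _ \<kappa> \<kappa> _ \<kappa>])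
    finally have BXB: "transpose_mat B * X * B = det R \<cdot>\<^sub>m Z k" .
    have "transpose_mat X = X"
      by (rule sym_cancel[OF cB cX dB]) (simp add: BXB transpose_smult Zsym[OF k])
    moreover have "transpose_mat X = transpose_mat (S k) * cof R * transpose_mat Q"
      unfolding X_def using cQ adjR cS cR
      by (simp add: ms transpose_mult[of _ \<kappa> \<kappa> _ \<kappa>] flip: tR)
    ultimately show "Q * transpose_mat (cof R) * S k - transpose_mat (S k) * cof R * transpose_mat Q = 0\<^sub>m \<kappa> \<kappa>"
      using cX unfolding tR X_def[symmetric] by simp
  next
    fix k assume k: "k < \<kappa>"
    define Y where "Y = S k * cof Q * transpose_mat R"
    have cY: "Y \<in> carrier_mat \<kappa> \<kappa>" unfolding Y_def
      by (rule mult_carrier_mat[OF mult_carrier_mat[OF cS cofQ]]) (simp add: cR)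
    have "transpose_mat A * R * adj_mat Q = transpose_mat B * (Q * adj_mat Q)"
      using cA cR adjQ AR'[of "adj_mat Q"] by (simp add: ms)
    also have "\<dots> = det Q \<cdot>\<^sub>m transpose_mat B"
      unfolding adjQ(1) using cB by (simp add: mult_smult_distrib[of _ \<kappa> \<kappa> _ \<kappa>])
    finally have e1: "transpose_mat A * R * adj_mat Q = det Q \<cdot>\<^sub>m transpose_mat B" .
    have "cof Q * (transpose_mat R * A) = transpose_mat (transpose_mat A * R * adj_mat Q)"
      using cA cR adjQ by (simp add: ms transpose_mult[of _ \<kappa> \<kappa> _ \<kappa>] flip: tQ)
    also have "\<dots> = det Q \<cdot>\<^sub>m B" unfolding e1 by (simp add: transpose_smult)
    finally have e2: "cof Q * (transpose_mat R * A) = det Q \<cdot>\<^sub>m B" .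
    have "transpose_mat A * Y * A = transpose_mat A * (S k * (cof Q * (transpose_mat R * A)))"
      using cA cS cofQ cR by (simp add: Y_def ms)
    also have "\<dots> = det Q \<cdot>\<^sub>m Z k"
      unfolding e2 Z_def using cA cS cB
      by (simp add: ms mult_smult_distrib[of _ \<kappa> \<kappa> _ \<kappa>])
    finally have AYA: "transpose_mat A * Y * A = det Q \<cdot>\<^sub>m Z k" .
    have "transpose_mat Y = Y"
      by (rule sym_cancel[OF cA cY dA]) (simp add: AYA transpose_smult Zsym[OF k])
    moreover have "transpose_mat Y = Q' * transpose_mat (S k)" if "Q' = R * transpose_mat (cof Q)" for Q'
      unfolding Y_def that using cQ cofQ cS cR
      by (simp add: ms transpose_mult[of _ \<kappa> \<kappa> _ \<kappa>])
    ultimately show "S k * cof Q * transpose_mat R - R * transpose_mat (cof Q) * transpose_mat (S k) = 0\<^sub>m \<kappa> \<kappa>"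
      using cY unfolding Y_def[symmetric] by (metis minus_r_inv_mat)
  qed
qed

end
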